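(* Let $b\ge2$ be an integer, let $X\subseteq\mathbf{N}^*$ be nonempty, let $J=\{\lfloor\log_b x\rfloor: x\in X\}$, let $j_0=\min J$, and let $G$ denote the smallest $b$-dc-semigroup containing $X$. \begin{enumerate} \item Suppose $j_0>0$, and let $l_0$ be a positive integer with $\{j_0,j_0+1,\dots,j_0+l_0-1\}\subseteq J$. Put $d=\lceil j_0/l_0\rceil$ and $t=dj_0$. \begin{itemize} \item If $d=1$, then $G=I_b(j_0,+\infty)$. \item If $d>1$, write $J\cap\{0,1,\dots,t-1\}=\bigcup_{k=0}^{n}\{j_k,j_k+1,\dots,j_k+l_k-1\}$ with $n\in\mathbf{N}$, $j_k\in\mathbf{N}$, $l_k\in\mathbf{N}^*$ and $j_{k+1}>j_k+l_k$ for $0\le k<n$. Then $G$ is the union of $I_b(t,+\infty)$ with all the sets $I_b\bigl(\sum_{i=1}^e j_{k_i},\ \sum_{i=1}^e l_{k_i}\bigr)$, where $1\le e<d$ and $k_1,\dots,k_e\in\{0,\dots,n\}$ with $j_{k_1}\le\dots\le j_{k_e}$. \end{itemize} \item Suppose $j_0=0$ and $b=2$. If $X=\{1\}$ then $G=\{1\}$. Otherwise, $G=\{1\}\cup G'$, where $G'$ is the smallest $2$-dc-semigroup containing $X\setminus\{1\}$ (described by part (1), applied with $J$ replaced by $J\setminus\{0\}$). \item Suppose $j_0=0$ and $b>2$. Then $G=\mathbf{N}^*$. \end{enumerate}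
   Context: $\mathbf{N}=\{0,1,2,\dots\}$ and $\mathbf{N}^*=\mathbf{N}\setminus\{0\}$. For an integer $b\ge2$, a $b$-dc-semigroup is a subsemigroup $G$ of the multiplicative semigroup $(\mathbf{N}^*,\cdot)$ which is closed with respect to the number of base-$b$ digits: if $x\in G$ and $b^{n-1}\le x<b^n$ then $\{y\in\mathbf{N}: b^{n-1}\le y<b^n\}\subseteq G$. For $i\in\mathbf{N}$ and $j\in\mathbf{N}^*$, $I_b(i,j)=\{x\in\mathbf{N}: b^i\le x<b^{i+j}\}$ and $I_b(i,+\infty)=\{x\in\mathbf{N}: x\ge b^i\}$. Note $\lfloor\log_b x\rfloor$ is one less than the number of base-$b$ digits of $x$. *)

theory Defs
  imports Complex_Main
begin

definition dc_semigroup :: "nat \<Rightarrow> nat set \<Rightarrow> bool" where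
  "dc_semigroup b G \<longleftrightarrow>
     G \<subseteq> {0<..} \<and>
     (\<forall>x\<in>G. \<forall>y\<in>G. x * y \<in> G) \<and>
     (\<forall>x\<in>G. \<forall>n::nat. 1 \<le> n \<and> b ^ (n - 1) \<le> x \<and> x < b ^ n \<longrightarrow>
        {y. b ^ (n - 1) \<le> y \<and> y < b ^ n} \<subseteq> G)"

definition dc_hull :: "nat \<Rightarrow> nat set \<Rightarrow> nat set" where
  "dc_hull b X = \<Inter> {G. dc_semigroup b G \<and> X \<subseteq> G}"

definition Ib :: "nat \<Rightarrow> nat \<Rightarrow> nat \<Rightarrow> nat set" where
  "Ib b i j = {x. b ^ i \<le> x \<and> x < b ^ (i + j)}"

definition Ib_inf :: "nat \<Rightarrow> nat \<Rightarrow> nat set" where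
  "Ib_inf b i = {x. x \<ge> b ^ i}"

end

theory Submission
  imports Defs "HOL-Library.Multiset"
begin

definition dg :: "nat \<Rightarrow> nat \<Rightarrow> nat" where
  "dg b x = nat \<lfloor>log (real b) (real x)\<rfloor>"

lemma dg_bounds:
  assumes "2 \<le> b" "0 < x"
  shows "b ^ dg b x \<le> x \<and> x < b ^ (dg b x + 1)"
proof -
  have "log (real b) (real x) \<ge> 0" using assms by simp
  hence "\<lfloor>log (real b) (real x)\<rfloor> = int (dg b x)" unfolding dg_def by simp
  thus ?thesis using floor_log_nat_eq_powr_iff[OF assms(1) assms(2)] by simp
qed

lemma dg_eq:
  assumes "2 \<le> b" "b ^ n \<le> x" "x < b ^ (n+1)"
  shows "dg b x = n"
  using floor_log_nat_eq_if[OF assms(2,3,1)] unfolding dg_def by simp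

lemma pow_le_iff_dg:
  assumes "2 \<le> b" "0 < x"
  shows "b ^ k \<le> x \<longleftrightarrow> k \<le> dg b x"
proof
  assume h: "b ^ k \<le> x"
  show "k \<le> dg b x"
  proof (rule ccontr)
    assume "\<not> k \<le> dg b x"
    hence "b ^ (dg b x + 1) \<le> b ^ k" using assms by (intro power_increasing) auto
    thus False using h dg_bounds[OF assms] by simp
  qed
next
  assume "k \<le> dg b x"
  hence "b ^ k \<le> b ^ dg b x" using assms by (intro power_increasing) auto
  thus "b ^ k \<le> x" using dg_bounds[OF assms] by simp
qed

lemma less_pow_iff_dg:
  assumes "2 \<le> b" "0 < x"
  shows "x < b ^ k \<longleftrightarrow> dg b x < k"
  using pow_le_iff_dg[OF assms, of k] by linarith

lemma Ib_iff:
  assumes "2 \<le> b"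
  shows "x \<in> Ib b i j \<longleftrightarrow> 0 < x \<and> i \<le> dg b x \<and> dg b x < i + j"
proof (cases "x = 0")
  case True thus ?thesis using assms by (simp add: Ib_def)
next
  case False thus ?thesis using pow_le_iff_dg[OF assms] less_pow_iff_dg[OF assms] by (auto simp: Ib_def)
qed

lemma Ib_inf_iff:
  assumes "2 \<le> b"
  shows "x \<in> Ib_inf b i \<longleftrightarrow> 0 < x \<and> i \<le> dg b x"
proof (cases "x = 0")
  case True thus ?thesis using assms by (simp add: Ib_inf_def)
next
  case False thus ?thesis using pow_le_iff_dg[OF assms] by (auto simp: Ib_inf_def)
qed

definition cls :: "nat \<Rightarrow> nat set \<Rightarrow> nat set" where
  "cls b S = {x. 0 < x \<and> dg b x \<in> S}"

lemma dc_closure: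
  assumes "2 \<le> b" "dc_semigroup b G" "x \<in> G" "b ^ dg b x \<le> y" "y < b ^ (dg b x + 1)"
  shows "y \<in> G"
proof -
  have "x > 0" using assms(2,3) by (auto simp: dc_semigroup_def)
  have "{y. b ^ (dg b x + 1 - 1) \<le> y \<and> y < b ^ (dg b x + 1)} \<subseteq> G"
    using assms(2,3) dg_bounds[OF assms(1) \<open>x>0\<close>] unfolding dc_semigroup_def
    by (metis add_diff_cancel_right' le_add2)
  thus ?thesis using assms(4,5) by auto
qed

lemma dg_mult:
  assumes "2 \<le> b" "0 < x" "0 < y"
  shows "dg b (x*y) = dg b x + dg b y \<or> dg b (x*y) = dg b x + dg b y + 1"
proof -
  have xy: "0 < x*y" using assms by simp
  have "b ^ (dg b x + dg b y) \<le> x * y"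
    unfolding power_add using assms(1) dg_bounds[OF assms(1,2)] dg_bounds[OF assms(1,3)] by (intro mult_le_mono) auto
  moreover have "x * y < b ^ (dg b x + dg b y + 2)"
  proof -
    have "x * y < b ^ (dg b x + 1) * b ^ (dg b y + 1)"
      using assms(1) dg_bounds[OF assms(1,2)] dg_bounds[OF assms(1,3)] by (intro mult_strict_mono) auto
    moreover have "b ^ (dg b x + 1) * b ^ (dg b y + 1) = b ^ ((dg b x + 1) + (dg b y + 1))"
      by (rule power_add[symmetric])
    moreover have "(dg b x + 1) + (dg b y + 1) = dg b x + dg b y + 2" by simp
    ultimately show ?thesis by metis
  qed
  ultimately have "dg b x + dg b y \<le> dg b (x*y)" "dg b (x*y) < dg b x + dg b y + 2"
    using pow_le_iff_dg[OF assms(1) xy] less_pow_iff_dg[OF assms(1) xy] by blast+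
  thus ?thesis by linarith
qed

definition addclosed :: "nat set \<Rightarrow> bool" where
  "addclosed S \<longleftrightarrow> (\<forall>i\<in>S. \<forall>j\<in>S. i + j \<in> S \<and> i + j + 1 \<in> S)"

lemma cls_dc:
  assumes "2 \<le> b" "addclosed S"
  shows "dc_semigroup b (cls b S)"
  unfolding dc_semigroup_def
proof (intro conjI ballI allI impI)
  show "cls b S \<subseteq> {0<..}" by (auto simp: cls_def)
next
  fix x y assume "x \<in> cls b S" "y \<in> cls b S"
  thus "x * y \<in> cls b S" using dg_mult[OF assms(1)] assms(2) unfolding cls_def addclosed_def
    by (metis (mono_tags, lifting) mem_Collect_eq nat_0_less_mult_iff)
next
  fix x n assume x: "x \<in> cls b S" and h: "1 \<le> n \<and> b ^ (n - 1) \<le> x \<and> x < b ^ n"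
  show "{y. b ^ (n - 1) \<le> y \<and> y < b ^ n} \<subseteq> cls b S"
  proof
    fix y assume y: "y \<in> {y. b ^ (n - 1) \<le> y \<and> y < b ^ n}"
    have "dg b x = n - 1" using h dg_eq[OF assms(1)] by (metis Nat.le_imp_diff_is_add add.commute)
    moreover have "dg b y = n - 1" using y h dg_eq[OF assms(1)] by (metis (no_types, lifting) Nat.le_imp_diff_is_add add.commute mem_Collect_eq)
    moreover have "0 < y"
    proof -
      have "1 \<le> b ^ (n - 1)" using assms(1) by simp
      thus ?thesis using y by simp
    qed
    ultimately show "y \<in> cls b S" using x by (auto simp: cls_def)
  qed
qed

lemma dg_pow: "2 \<le> b \<Longrightarrow> dg b (b ^ m) = m"
  by (rule dg_eq) auto

lemma pow_in_G:
  assumes "2 \<le> b" "dc_semigroup b G" "x \<in> G"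
  shows "b ^ dg b x \<in> G"
  using dc_closure[OF assms] assms(1) by simp

lemma in_G_of_pow:
  assumes "2 \<le> b" "dc_semigroup b G" "b ^ m \<in> G" "0 < y" "dg b y = m"
  shows "y \<in> G"
  using dc_closure[OF assms(1,2,3)] dg_bounds[OF assms(1,4)] assms(1,5) by (simp add: dg_pow)

lemma witness_step:
  assumes "2 \<le> b" "3 \<le> b \<or> (1 \<le> i \<and> 1 \<le> j)"
  shows "\<exists>x y. 0 < x \<and> 0 < y \<and> dg b x = i \<and> dg b y = j \<and> dg b (x * y) = i + j + 1"
proof (cases "3 \<le> b")
  case True
  define x where "x = (b - 1) * b ^ i"
  define y where "y = (b - 1) * b ^ j"
  have bb: "b \<le> (b - 1) * (b - 1)"
  proof -
    obtain k where "b = k + 3" using True by (metis add.commute le_Suc_ex)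
    thus ?thesis by (simp add: algebra_simps)
  qed
  have dx: "dg b x = i" unfolding x_def using assms(1) by (intro dg_eq) auto
  have dy: "dg b y = j" unfolding y_def using assms(1) by (intro dg_eq) auto
  have px: "0 < x" "0 < y" unfolding x_def y_def using assms(1) by auto
  have "b ^ (i + j + 1) \<le> x * y"
  proof -
    have "b ^ (i + j + 1) = b * (b ^ i * b ^ j)" by (simp add: power_add)
    also have "\<dots> \<le> ((b - 1) * (b - 1)) * (b ^ i * b ^ j)" using bb by (intro mult_le_mono1)
    also have "\<dots> = x * y" unfolding x_def y_def by (simp add: algebra_simps)
    finally show ?thesis .
  qed
  hence "i + j + 1 \<le> dg b (x * y)" using pow_le_iff_dg[OF assms(1), of "x * y" "i + j + 1"] px by simp
  hence "dg b (x * y) = i + j + 1" using dg_mult[OF assms(1) px] dx dy by auto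
  thus ?thesis using px dx dy by blast
next
  case False
  hence b2: "b = 2" using assms(1) by simp
  with assms have ij: "1 \<le> i" "1 \<le> j" by auto
  define x :: nat where "x = 3 * 2 ^ (i - 1)"
  define y :: nat where "y = 3 * 2 ^ (j - 1)"
  have ei: "(2::nat) ^ i = 2 * 2 ^ (i - 1)" using ij by (metis Suc_diff_le diff_Suc_1 power_Suc)
  have ej: "(2::nat) ^ j = 2 * 2 ^ (j - 1)" using ij by (metis Suc_diff_le diff_Suc_1 power_Suc)
  have dx: "dg b x = i" unfolding x_def b2 by (rule dg_eq) (use ei in auto)
  have dy: "dg b y = j" unfolding y_def b2 by (rule dg_eq) (use ej in auto)
  have px: "0 < x" "0 < y" unfolding x_def y_def by auto
  have "b ^ (i + j + 1) \<le> x * y"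
  proof -
    have "b ^ (i + j + 1) = 8 * (2 ^ (i - 1) * 2 ^ (j - 1))" unfolding b2 power_add using ei ej by simp
    also have "\<dots> \<le> x * y" unfolding x_def y_def by simp
    finally show ?thesis .
  qed
  hence "i + j + 1 \<le> dg b (x * y)" using pow_le_iff_dg[OF assms(1), of "x * y" "i + j + 1"] px by simp
  hence "dg b (x * y) = i + j + 1" using dg_mult[OF assms(1) px] dx dy by auto
  thus ?thesis using px dx dy by blast
qed

lemma pow_step:
  assumes "2 \<le> b" "dc_semigroup b G" "b ^ i \<in> G" "b ^ j \<in> G"
  shows "b ^ (i + j) \<in> G"
  using assms(2,3,4) unfolding dc_semigroup_def by (metis power_add)

lemma pow_step1:
  assumes "2 \<le> b" "dc_semigroup b G" "b ^ i \<in> G" "b ^ j \<in> G" "3 \<le> b \<or> (1 \<le> i \<and> 1 \<le> j)"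
  shows "b ^ (i + j + 1) \<in> G"
proof -
  obtain x y where w: "0 < x" "0 < y" "dg b x = i" "dg b y = j" "dg b (x * y) = i + j + 1"
    using witness_step[OF assms(1,5)] by blast
  have "x \<in> G" using in_G_of_pow[OF assms(1,2,3)] w by simp
  moreover have "y \<in> G" using in_G_of_pow[OF assms(1,2,4)] w by simp
  ultimately have "x * y \<in> G" using assms(2) unfolding dc_semigroup_def by blast
  from pow_in_G[OF assms(1,2) this] w show ?thesis by simp
qed

lemma hull_least: "dc_semigroup b G \<Longrightarrow> X \<subseteq> G \<Longrightarrow> dc_hull b X \<subseteq> G"
  unfolding dc_hull_def by blast

lemma hull_eq:
  assumes "dc_semigroup b H" "X \<subseteq> H" "\<And>G. dc_semigroup b G \<Longrightarrow> X \<subseteq> G \<Longrightarrow> H \<subseteq> G"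
  shows "dc_hull b X = H"
  using assms unfolding dc_hull_def by blast

lemma dc_pos: "2 \<le> b \<Longrightarrow> dc_semigroup b {0<..}"
  unfolding dc_semigroup_def
proof (intro conjI ballI allI impI)
  fix x n assume "(2::nat) \<le> b" "1 \<le> n \<and> b ^ (n - 1) \<le> x \<and> x < b ^ n"
  thus "{y. b ^ (n - 1) \<le> y \<and> y < b ^ n} \<subseteq> {0<..}"
  proof -
    have "1 \<le> b ^ (n - 1)" using \<open>2 \<le> b\<close> by simp
    thus ?thesis by auto
  qed
qed auto

lemma dcD1: "dc_semigroup b G \<Longrightarrow> x \<in> G \<Longrightarrow> 0 < x"
  unfolding dc_semigroup_def by auto
lemma dcD2: "dc_semigroup b G \<Longrightarrow> x \<in> G \<Longrightarrow> y \<in> G \<Longrightarrow> x * y \<in> G"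
  unfolding dc_semigroup_def by auto
lemma dcD3: "dc_semigroup b G \<Longrightarrow> x \<in> G \<Longrightarrow> 1 \<le> n \<Longrightarrow> b ^ (n - 1) \<le> x \<Longrightarrow> x < b ^ n
   \<Longrightarrow> b ^ (n - 1) \<le> y \<Longrightarrow> y < b ^ n \<Longrightarrow> y \<in> G"
  unfolding dc_semigroup_def by blast
lemma dcI:
  assumes "\<And>x. x \<in> G \<Longrightarrow> 0 < x" "\<And>x y. x \<in> G \<Longrightarrow> y \<in> G \<Longrightarrow> x * y \<in> G"
    "\<And>x n y. x \<in> G \<Longrightarrow> 1 \<le> n \<Longrightarrow> b ^ (n - 1) \<le> x \<Longrightarrow> x < b ^ n
   \<Longrightarrow> b ^ (n - 1) \<le> y \<Longrightarrow> y < b ^ n \<Longrightarrow> y \<in> G"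
  shows "dc_semigroup b G"
  unfolding dc_semigroup_def using assms by blast

lemma dc_Inter:
  assumes "F \<noteq> {}" "\<And>G. G \<in> F \<Longrightarrow> dc_semigroup b G"
  shows "dc_semigroup b (\<Inter>F)"
proof (rule dcI)
  fix x assume "x \<in> \<Inter>F"
  moreover obtain G0 where "G0 \<in> F" using assms(1) by blast
  ultimately show "0 < x" using dcD1[OF assms(2)] by blast
next
  fix x y assume "x \<in> \<Inter>F" "y \<in> \<Inter>F"
  thus "x * y \<in> \<Inter>F" using dcD2[OF assms(2)] by blast
next
  fix x n y assume "x \<in> \<Inter>F" "1 \<le> n" "b ^ (n - 1) \<le> x" "x < b ^ n" "b ^ (n - 1) \<le> y" "y < b ^ n"
  thus "y \<in> \<Inter>F" using dcD3[OF assms(2)] by blast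
qed

lemma hull_dc:
  assumes "2 \<le> b" "0 \<notin> Y"
  shows "dc_semigroup b (dc_hull b Y)" "Y \<subseteq> dc_hull b Y"
proof -
  have "Y \<subseteq> {0<..}"
  proof
    fix x assume "x \<in> Y" thus "x \<in> {0<..}" using assms(2) by (cases x) auto
  qed
  hence ne: "{0<..} \<in> {G. dc_semigroup b G \<and> Y \<subseteq> G}" using dc_pos[OF assms(1)] by auto
  show "Y \<subseteq> dc_hull b Y" unfolding dc_hull_def by blast
  show "dc_semigroup b (dc_hull b Y)" unfolding dc_hull_def
    by (rule dc_Inter) (use ne in auto)
qed

lemma dc_empty: "dc_semigroup b {}"
  by (rule dcI) auto

lemma dc_insert1:
  assumes "dc_semigroup 2 H"
  shows "dc_semigroup 2 ({1} \<union> H)"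
proof (rule dcI)
  fix x assume "x \<in> {1} \<union> H" thus "0 < x" using dcD1[OF assms] by auto
next
  fix x y assume "x \<in> {1} \<union> H" "y \<in> {1} \<union> H"
  thus "x * y \<in> {1} \<union> H" using dcD2[OF assms] by auto
next
  fix x and n y :: nat assume x: "x \<in> {1} \<union> H" and h: "1 \<le> n" "2 ^ (n - 1) \<le> x" "x < (2::nat) ^ n"
     and y: "2 ^ (n - 1) \<le> y" "y < (2::nat) ^ n"
  show "y \<in> {1} \<union> H"
  proof (cases "x = 1")
    case True
    have "n - 1 = 0"
    proof (rule ccontr)
      assume "n - 1 \<noteq> 0"
      hence "(2::nat) ^ 1 \<le> 2 ^ (n - 1)" by (intro power_increasing) auto
      thus False using h True by simp
    qed
    hence "n = 1" using h by simp
    thus ?thesis using y by auto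
  next
    case False
    hence "x \<in> H" using x by auto
    thus ?thesis using dcD3[OF assms _ h y] by blast
  qed
qed

definition SJ :: "nat set \<Rightarrow> nat set" where
  "SJ J = {m. \<exists>as. as \<noteq> [] \<and> set as \<subseteq> J \<and> sum_list as \<le> m \<and> m < sum_list as + length as}"

lemma SJ_addclosed: "addclosed (SJ J)"
  unfolding addclosed_def
proof (intro ballI conjI)
  fix i j assume "i \<in> SJ J" "j \<in> SJ J"
  then obtain as bs where a: "as \<noteq> []" "set as \<subseteq> J" "sum_list as \<le> i" "i < sum_list as + length as"
    and b: "bs \<noteq> []" "set bs \<subseteq> J" "sum_list bs \<le> j" "j < sum_list bs + length bs"
    unfolding SJ_def by blast
  have P: "as @ bs \<noteq> [] \<and> set (as @ bs) \<subseteq> J" using a b by auto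
  have "sum_list (as @ bs) \<le> i + j \<and> i + j < sum_list (as @ bs) + length (as @ bs)"
    using a b by auto
  with P show "i + j \<in> SJ J" unfolding SJ_def by blast
  have "sum_list (as @ bs) \<le> i + j + 1 \<and> i + j + 1 < sum_list (as @ bs) + length (as @ bs)"
    using a b by auto
  with P show "i + j + 1 \<in> SJ J" unfolding SJ_def by blast
qed

lemma J_sub_SJ: "J \<subseteq> SJ J"
proof
  fix j assume "j \<in> J"
  thus "j \<in> SJ J" unfolding SJ_def by (intro CollectI exI[of _ "[j]"]) auto
qed

lemma SJ_min_aux:
  assumes "2 \<le> b" "dc_semigroup b G" "\<forall>j\<in>J. 1 \<le> j \<and> b ^ j \<in> G"
  shows "as \<noteq> [] \<Longrightarrow> set as \<subseteq> J \<Longrightarrow> c < length as \<Longrightarrow> b ^ (sum_list as + c) \<in> G \<and> 1 \<le> sum_list as + c"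
proof (induction as arbitrary: c)
  case Nil thus ?case by simp
next
  case (Cons a as)
  have a: "1 \<le> a" "b ^ a \<in> G" using Cons.prems assms(3) by auto
  show ?case
  proof (cases "as = []")
    case True thus ?thesis using Cons.prems a by simp
  next
    case False
    show ?thesis
    proof (cases "c < length as")
      case True
      from Cons.IH[OF False _ True] Cons.prems have ih: "b ^ (sum_list as + c) \<in> G" by auto
      from pow_step[OF assms(1,2) a(2) ih] a show ?thesis by (simp add: add.assoc)
    next
      case c: False
      have l1: "length as \<ge> 1" using False by (cases as) auto
      have "c = length as" using Cons.prems c by simp
      hence c': "c - 1 < length as" "c = (c - 1) + 1" using l1 by linarith+
      from Cons.IH[OF False _ c'(1)] Cons.prems have ih: "b ^ (sum_list as + (c - 1)) \<in> G" "1 \<le> sum_list as + (c - 1)" by auto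
      from pow_step1[OF assms(1,2) a(2) ih(1)] a ih(2) have "b ^ (a + (sum_list as + (c - 1)) + 1) \<in> G" by simp
      moreover have "a + (sum_list as + (c - 1)) + 1 = sum_list (a # as) + c" using c' by simp
      ultimately have "b ^ (sum_list (a # as) + c) \<in> G" by metis
      thus ?thesis using a by simp
    qed
  qed
qed

lemma hull_SJ:
  assumes "2 \<le> b" "0 \<notin> X" "J = dg b ` X" "\<forall>j\<in>J. 1 \<le> j"
  shows "dc_hull b X = cls b (SJ J)"
proof (rule hull_eq)
  show "dc_semigroup b (cls b (SJ J))" by (rule cls_dc[OF assms(1) SJ_addclosed])
  show "X \<subseteq> cls b (SJ J)"
  proof
    fix x assume "x \<in> X"
    hence "0 < x" "dg b x \<in> SJ J" using assms(2,3) J_sub_SJ[of J] by (cases x, auto)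
    thus "x \<in> cls b (SJ J)" unfolding cls_def by blast
  qed
next
  fix G assume G: "dc_semigroup b G" "X \<subseteq> G"
  have J: "\<forall>j\<in>J. 1 \<le> j \<and> b ^ j \<in> G"
  proof
    fix j assume "j \<in> J"
    then obtain x where "x \<in> X" "j = dg b x" using assms(3) by blast
    thus "1 \<le> j \<and> b ^ j \<in> G" using assms(4) \<open>j \<in> J\<close> pow_in_G[OF assms(1) G(1)] G(2) by blast
  qed
  show "cls b (SJ J) \<subseteq> G"
  proof
    fix y assume "y \<in> cls b (SJ J)"
    then obtain as where y: "0 < y" "as \<noteq> []" "set as \<subseteq> J" "sum_list as \<le> dg b y" "dg b y < sum_list as + length as"
      unfolding cls_def SJ_def by blast
    define c where "c = dg b y - sum_list as"
    have "c < length as" "dg b y = sum_list as + c" using y unfolding c_def by auto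
    with SJ_min_aux[OF assms(1) G(1) J y(2,3)] have "b ^ dg b y \<in> G" by auto
    from in_G_of_pow[OF assms(1) G(1) this y(1)] show "y \<in> G" by simp
  qed
qed

lemma la2_set: "list_all2 P as ps \<Longrightarrow> a \<in> set as \<Longrightarrow> \<exists>pq\<in>set ps. P a pq"
proof (induction as arbitrary: ps)
  case Nil thus ?case by simp
next
  case (Cons x xs)
  then obtain y ys where "ps = y # ys" by (cases ps) auto
  thus ?case using Cons by auto
qed

lemma rep:
  "ps \<noteq> [] \<Longrightarrow> (\<forall>pq\<in>set ps. 0 < snd pq) \<Longrightarrow> r < sum_list (map snd ps) \<Longrightarrow>
   \<exists>as c. list_all2 (\<lambda>a pq. fst pq \<le> a \<and> a < fst pq + snd pq) as ps \<and> c < length ps \<and>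
     sum_list as + c = sum_list (map fst ps) + r"
proof (induction ps arbitrary: r)
  case Nil thus ?case by simp
next
  case (Cons pq ps)
  obtain p q where pq: "pq = (p, q)" by fastforce
  have q: "0 < q" using Cons.prems pq by auto
  show ?case
  proof (cases "ps = []")
    case True
    hence "r < q" using Cons.prems pq by simp
    thus ?thesis using True pq by (intro exI[of _ "[p + r]"] exI[of _ 0]) auto
  next
    case ne: False
    have pos: "\<forall>pq\<in>set ps. 0 < snd pq" using Cons.prems by auto
    define Q where "Q = sum_list (map snd ps)"
    have Q1: "1 \<le> Q"
    proof -
      obtain x xs where "ps = x # xs" using ne by (cases ps) auto
      thus ?thesis using pos unfolding Q_def by auto
    qed
    have rQ: "r < q + Q" using Cons.prems(3) pq unfolding Q_def by simp
    show ?thesis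
    proof (cases "r < Q")
      case True
      from Cons.IH[OF ne pos, of r] True obtain as c where
        h: "list_all2 (\<lambda>a pq. fst pq \<le> a \<and> a < fst pq + snd pq) as ps" "c < length ps"
           "sum_list as + c = sum_list (map fst ps) + r" unfolding Q_def by blast
      show ?thesis using h pq q by (intro exI[of _ "p # as"] exI[of _ c]) auto
    next
      case False
      have "Q - 1 < sum_list (map snd ps)" using Q1 unfolding Q_def by simp
      from Cons.IH[OF ne pos this] obtain as c where
        h: "list_all2 (\<lambda>a pq. fst pq \<le> a \<and> a < fst pq + snd pq) as ps" "c < length ps"
           "sum_list as + c = sum_list (map fst ps) + (Q - 1)" by blast
      have "r - Q < q" using rQ False by linarith
      hence "list_all2 (\<lambda>a pq. fst pq \<le> a \<and> a < fst pq + snd pq) ((p + (r - Q)) # as) (pq # ps)"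
        using h(1) pq by simp
      moreover have "c + 1 < length (pq # ps)" using h(2) by simp
      moreover have "sum_list ((p + (r - Q)) # as) + (c + 1) = sum_list (map fst (pq # ps)) + r"
        using h(3) pq False Q1 by simp
      ultimately show ?thesis by blast
    qed
  qed
qed

lemma SJ_lower:
  assumes "\<forall>j\<in>J. j0 \<le> j" "set as \<subseteq> J"
  shows "length as * j0 \<le> sum_list as"
  using assms(2)
proof (induction as)
  case Nil thus ?case by simp
next
  case (Cons a as)
  hence "length as * j0 \<le> sum_list as" "j0 \<le> a" using assms(1) by auto
  thus ?case by simp
qed

lemma SJ_ge:
  assumes "\<forall>j\<in>J. j0 \<le> j" "m \<in> SJ J"
  shows "j0 \<le> m"
proof -
  obtain as where h: "as \<noteq> []" "set as \<subseteq> J" "sum_list as \<le> m" using assms(2) unfolding SJ_def by blast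
  have "length as * j0 \<le> sum_list as" by (rule SJ_lower[OF assms(1) h(2)])
  moreover have "1 \<le> length as" using h(1) by (cases as) auto
  moreover have "1 * j0 \<le> length as * j0" using calculation(2) by (rule mult_le_mono1)
  ultimately have "j0 \<le> sum_list as" by linarith
  thus ?thesis using h(3) by simp
qed

lemma big:
  assumes "0 < j0" "0 < l0" "{j0..<j0+l0} \<subseteq> J" "d * j0 \<le> m" "j0 \<le> d * l0" "1 \<le> d"
  shows "m \<in> SJ J"
proof -
  define e where "e = m div j0"
  have "d * j0 div j0 \<le> m div j0" by (rule div_le_mono) (rule assms(4))
  hence de: "d \<le> e" using assms(1) unfolding e_def by simp
  hence e1: "1 \<le> e" using assms(6) by simp
  have m1: "e * j0 \<le> m" unfolding e_def by (simp add: div_times_less_eq_dividend)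
  have m2: "m < e * j0 + j0"
  proof -
    have "m = m div j0 * j0 + m mod j0" by simp
    moreover have "m mod j0 < j0" using assms(1) by simp
    ultimately show ?thesis unfolding e_def by linarith
  qed
  have "d * l0 \<le> e * l0" using de by simp
  hence jl: "j0 \<le> e * l0" using assms(5) by linarith
  define ps where "ps = replicate e (j0, l0)"
  have ne: "ps \<noteq> []" using e1 unfolding ps_def by simp
  have pos: "\<forall>pq\<in>set ps. 0 < snd pq" using assms(2) unfolding ps_def by simp
  have sn: "sum_list (map snd ps) = e * l0" "sum_list (map fst ps) = e * j0"
    unfolding ps_def by (simp_all add: sum_list_replicate)
  have "m - e * j0 < sum_list (map snd ps)" using m1 m2 jl sn by linarith
  from rep[OF ne pos this] obtain as c where
    h: "list_all2 (\<lambda>a pq. fst pq \<le> a \<and> a < fst pq + snd pq) as ps" "c < length ps"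
       "sum_list as + c = sum_list (map fst ps) + (m - e * j0)" by blast
  have "set as \<subseteq> J"
  proof
    fix a assume "a \<in> set as"
    from la2_set[OF h(1) this] have "j0 \<le> a \<and> a < j0 + l0" unfolding ps_def using e1 by auto
    thus "a \<in> J" using assms(3) by auto
  qed
  moreover have "length as = e" using list_all2_lengthD[OF h(1)] unfolding ps_def by simp
  moreover have "as \<noteq> []" using calculation(2) e1 by auto
  moreover have "sum_list as + c = m" using h(3) sn m1 by simp
  moreover have "c < e" using h(2) unfolding ps_def by simp
  ultimately have "as \<noteq> [] \<and> set as \<subseteq> J \<and> sum_list as \<le> m \<and> m < sum_list as + length as" by linarith
  thus ?thesis unfolding SJ_def by blast
qed

lemma sum_nth_shift: "(\<Sum>i=1..length L. f (L ! (i - 1))) = sum_list (map f L)"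
proof -
  have "(\<Sum>i=1..length L. f (L ! (i - 1))) = (\<Sum>i<length L. f (L ! i))"
    using sum.atLeast1_atMost_eq[of "\<lambda>i. f (L ! (i - 1))" "length L"] by simp
  also have "\<dots> = sum_list (map f L)"
    by (simp add: sum_list_sum_nth atLeast0LessThan)
  finally show ?thesis .
qed

lemma sum_list_perm:
  fixes f :: "'a \<Rightarrow> nat"
  shows "sum_list (map f (sort_key g xs)) = sum_list (map f xs)"
proof -
  have "mset (map f (sort_key g xs)) = mset (map f xs)" by simp
  thus ?thesis by (metis sum_mset_sum_list)
qed

lemma sum_upt_list: "(\<Sum>i=1..e. f i) = sum_list (map f [1..<Suc e])"
proof -
  have "{1..e} = set [1..<Suc e]" by auto
  thus ?thesis by (simp only: sum_set_upt_conv_sum_list_nat)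
qed


lemma idx:
  fixes n :: nat and js ls :: "nat \<Rightarrow> nat"
  assumes j0: "0 < j0" "0 < l0" "{j0..<j0+l0} \<subseteq> J" "\<forall>j\<in>J. j0 \<le> j" "j0 \<le> d * l0" "1 \<le> d"
    and bl: "\<forall>k\<le>n. 0 < ls k" "J \<inter> {0..<d * j0} = (\<Union>k\<le>n. {js k..<js k + ls k})"
  shows "m \<in> SJ J \<longleftrightarrow> d * j0 \<le> m \<or> (\<exists>e\<in>{1..<d}. \<exists>ks\<in>{ks::nat \<Rightarrow> nat.
                        (\<forall>i\<in>{1..e}. ks i \<le> n) \<and>
                        (\<forall>i. 1 \<le> i \<and> i < e \<longrightarrow> js (ks i) \<le> js (ks (Suc i)))}.
          (\<Sum>i=1..e. js (ks i)) \<le> m \<and> m < (\<Sum>i=1..e. js (ks i)) + (\<Sum>i=1..e. ls (ks i)))"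
  (is "_ \<longleftrightarrow> _ \<or> ?R")
proof
  assume mS: "m \<in> SJ J"
  show "d * j0 \<le> m \<or> ?R"
  proof (cases "d * j0 \<le> m")
    case True thus ?thesis by blast
  next
    case False
    hence mt: "m < d * j0" by simp
    obtain as where h: "as \<noteq> []" "set as \<subseteq> J" "sum_list as \<le> m" "m < sum_list as + length as"
      using mS unfolding SJ_def by blast
    have blk_ex: "\<exists>k. k \<le> n \<and> js k \<le> a \<and> a < js k + ls k" if "a \<in> set as" for a
    proof -
      have "a \<le> sum_list as" using that by (rule member_le_sum_list) auto
      hence "a \<in> J \<inter> {0..<d * j0}" using that h mt by auto
      thus ?thesis using bl(2) by auto
    qed
    define blk where "blk a = (SOME k. k \<le> n \<and> js k \<le> a \<and> a < js k + ls k)" for a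
    have blk: "blk a \<le> n \<and> js (blk a) \<le> a \<and> a < js (blk a) + ls (blk a)" if "a \<in> set as" for a
      unfolding blk_def using someI_ex[OF blk_ex[OF that]] .
    define e where "e = length as"
    have e1: "1 \<le> e" using h(1) unfolding e_def by (cases as) auto
    have "e * j0 \<le> sum_list as" unfolding e_def by (rule SJ_lower[OF j0(4) h(2)])
    hence "e * j0 < d * j0" using h(3) mt by linarith
    hence ed: "e < d" by simp
    define L where "L = sort_key js (map blk as)"
    define ks where "ks i = L ! (i - 1)" for i
    have lenL: "length L = e" unfolding L_def e_def by simp
    have setL: "set L = blk ` set as" unfolding L_def by simp
    have sorted: "sorted (map js L)" unfolding L_def by simp
    have sums: "(\<Sum>i=1..e. f (ks i)) = sum_list (map (f \<circ> blk) as)" for f :: "nat \<Rightarrow> nat"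
    proof -
      have "(\<Sum>i=1..e. f (ks i)) = sum_list (map f L)" unfolding ks_def using sum_nth_shift[where L=L and f=f] lenL by simp
      also have "\<dots> = sum_list (map f (map blk as))" unfolding L_def by (rule sum_list_perm)
      finally show ?thesis by simp
    qed
    have c1: "\<forall>i\<in>{1..e}. ks i \<le> n"
    proof
      fix i assume "i \<in> {1..e}"
      hence "L ! (i - 1) \<in> set L" using lenL by auto
      then obtain a where "a \<in> set as" "L ! (i - 1) = blk a" using setL by auto
      thus "ks i \<le> n" unfolding ks_def using blk by auto
    qed
    have c2: "\<forall>i. 1 \<le> i \<and> i < e \<longrightarrow> js (ks i) \<le> js (ks (Suc i))"
    proof (intro allI impI)
      fix i assume i: "1 \<le> i \<and> i < e"
      hence "map js L ! (i - 1) \<le> map js L ! i" using sorted lenL by (intro sorted_nth_mono) auto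
      moreover have "i - 1 < length L" "i < length L" using i lenL by auto
      ultimately show "js (ks i) \<le> js (ks (Suc i))" unfolding ks_def by simp
    qed
    have s1: "(\<Sum>i=1..e. js (ks i)) \<le> m"
    proof -
      have "sum_list (map (js \<circ> blk) as) \<le> sum_list (map (\<lambda>a. a) as)"
        by (rule sum_list_mono) (use blk in auto)
      thus ?thesis using sums[of js] h(3) by simp
    qed
    have s2: "m < (\<Sum>i=1..e. js (ks i)) + (\<Sum>i=1..e. ls (ks i))"
    proof -
      have "sum_list (map (\<lambda>a. a + 1) as) \<le> sum_list (map (\<lambda>a. js (blk a) + ls (blk a)) as)"
        by (rule sum_list_mono) (use blk in fastforce)
      moreover have "sum_list (map (\<lambda>a. a + 1) as) = sum_list as + length as"
        by (induction as) auto
      moreover have "sum_list (map (\<lambda>a. js (blk a) + ls (blk a)) as)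
          = sum_list (map (js \<circ> blk) as) + sum_list (map (ls \<circ> blk) as)"
        by (induction as) auto
      ultimately show ?thesis using sums[of js] sums[of ls] h(4) by simp
    qed
    have "e \<in> {1..<d}" using e1 ed by simp
    moreover have "ks \<in> {ks::nat \<Rightarrow> nat. (\<forall>i\<in>{1..e}. ks i \<le> n) \<and>
                        (\<forall>i. 1 \<le> i \<and> i < e \<longrightarrow> js (ks i) \<le> js (ks (Suc i)))}"
      using c1 c2 by blast
    ultimately have "?R" using s1 s2 by blast
    thus ?thesis by blast
  qed
next
  assume "d * j0 \<le> m \<or> ?R"
  thus "m \<in> SJ J"
  proof
    assume "d * j0 \<le> m" thus ?thesis using big[OF j0(1,2,3) _ j0(5,6)] by blast
  next
    assume ?R
    then obtain e ks where e: "1 \<le> e" "e < d" and kn: "\<forall>i\<in>{1..e}. ks i \<le> n"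
      and s: "(\<Sum>i=1..e. js (ks i)) \<le> m" "m < (\<Sum>i=1..e. js (ks i)) + (\<Sum>i=1..e. ls (ks i))"
      by auto
    define ps where "ps = map (\<lambda>i. (js (ks i), ls (ks i))) [1..<Suc e]"
    have ne: "ps \<noteq> []" using e(1) unfolding ps_def by simp
    have pos: "\<forall>pq\<in>set ps. 0 < snd pq" using kn bl(1) unfolding ps_def by auto
    have sf: "sum_list (map fst ps) = (\<Sum>i=1..e. js (ks i))"
      unfolding ps_def sum_upt_list by (simp add: comp_def)
    have ss: "sum_list (map snd ps) = (\<Sum>i=1..e. ls (ks i))"
      unfolding ps_def sum_upt_list by (simp add: comp_def)
    have "m - (\<Sum>i=1..e. js (ks i)) < sum_list (map snd ps)" using s ss by linarith
    from rep[OF ne pos this] obtain as c where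
      h: "list_all2 (\<lambda>a pq. fst pq \<le> a \<and> a < fst pq + snd pq) as ps" "c < length ps"
         "sum_list as + c = sum_list (map fst ps) + (m - (\<Sum>i=1..e. js (ks i)))" by blast
    have "set as \<subseteq> J"
    proof
      fix a assume "a \<in> set as"
      from la2_set[OF h(1) this] obtain pq where pq: "pq \<in> set ps" "fst pq \<le> a \<and> a < fst pq + snd pq"
        by blast
      have "pq \<in> (\<lambda>i. (js (ks i), ls (ks i))) ` {1..<Suc e}" using pq(1) unfolding ps_def set_map set_upt by assumption
      then obtain i where i: "i \<in> {1..<Suc e}" "pq = (js (ks i), ls (ks i))" by blast
      hence "i \<in> {1..e}" "js (ks i) \<le> a" "a < js (ks i) + ls (ks i)" using pq by auto
      hence "a \<in> (\<Union>k\<le>n. {js k..<js k + ls k})" using kn by auto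
      thus "a \<in> J" using bl(2) by blast
    qed
    moreover have "length as = e" using list_all2_lengthD[OF h(1)] unfolding ps_def by simp
    moreover have "as \<noteq> []" using calculation(2) e(1) by auto
    moreover have "sum_list as + c = m" using h(3) sf s by simp
    moreover have "c < e" using h(2) unfolding ps_def by (simp del: upt_Suc)
    ultimately have "as \<noteq> [] \<and> set as \<subseteq> J \<and> sum_list as \<le> m \<and> m < sum_list as + length as" by linarith
    thus ?thesis unfolding SJ_def by blast
  qed
qed

theorem mainTheorem4:
  fixes b :: nat and X :: "nat set" and J :: "nat set" and j0 :: nat and G :: "nat set"
  assumes hb: "2 \<le> b"
    and hX: "X \<noteq> {}" "0 \<notin> X"
    and hJ: "J = (\<lambda>x. nat \<lfloor>log (real b) (real x)\<rfloor>) ` X"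
    and hj0: "j0 = (LEAST j. j \<in> J)"
    and hG: "G = dc_hull b X"
  shows
   "(0 < j0 \<longrightarrow>
      (\<forall>l0::nat. 0 < l0 \<and> {j0..<j0 + l0} \<subseteq> J \<longrightarrow>
        (let d = nat \<lceil>real j0 / real l0\<rceil>; t = d * j0 in
          (d = 1 \<longrightarrow> G = Ib_inf b j0) \<and>
          (1 < d \<longrightarrow>
            (\<forall>(n::nat) (js::nat \<Rightarrow> nat) (ls::nat \<Rightarrow> nat).
               (\<forall>k\<le>n. 0 < ls k) \<and> (\<forall>k<n. js (Suc k) > js k + ls k) \<and>
               J \<inter> {0..<t} = (\<Union>k\<le>n. {js k..<js k + ls k}) \<longrightarrow>
               G = Ib_inf b t \<union>
                   (\<Union>e\<in>{1..<d}. \<Union>ks\<in>{ks::nat \<Rightarrow> nat.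
                        (\<forall>i\<in>{1..e}. ks i \<le> n) \<and>
                        (\<forall>i. 1 \<le> i \<and> i < e \<longrightarrow> js (ks i) \<le> js (ks (Suc i)))}.
                      Ib b (\<Sum>i=1..e. js (ks i)) (\<Sum>i=1..e. ls (ks i))))))))
    \<and> (j0 = 0 \<and> b = 2 \<longrightarrow>
          (X = {1} \<longrightarrow> G = {1}) \<and>
          (X \<noteq> {1} \<longrightarrow> G = {1} \<union> dc_hull 2 (X - {1})))
    \<and> (j0 = 0 \<and> 2 < b \<longrightarrow> G = {0<..})"
proof -
  have dgf: "(\<lambda>x. nat \<lfloor>log (real b) (real x)\<rfloor>) = dg b" by (rule ext) (simp add: dg_def)
  have J: "J = dg b ` X" unfolding hJ dgf ..
  have Jne: "J \<noteq> {}" using hX(1) J by simp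
  then obtain jj where "jj \<in> J" by blast
  hence j0J: "j0 \<in> J" unfolding hj0 by (rule LeastI)
  have j0le: "\<forall>j\<in>J. j0 \<le> j" unfolding hj0 by (auto intro: Least_le)
  have P1: "0 < j0 \<longrightarrow>
      (\<forall>l0::nat. 0 < l0 \<and> {j0..<j0 + l0} \<subseteq> J \<longrightarrow>
        (let d = nat \<lceil>real j0 / real l0\<rceil>; t = d * j0 in
          (d = 1 \<longrightarrow> G = Ib_inf b j0) \<and>
          (1 < d \<longrightarrow>
            (\<forall>(n::nat) (js::nat \<Rightarrow> nat) (ls::nat \<Rightarrow> nat).
               (\<forall>k\<le>n. 0 < ls k) \<and> (\<forall>k<n. js (Suc k) > js k + ls k) \<and>
               J \<inter> {0..<t} = (\<Union>k\<le>n. {js k..<js k + ls k}) \<longrightarrow>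
               G = Ib_inf b t \<union>
                   (\<Union>e\<in>{1..<d}. \<Union>ks\<in>{ks::nat \<Rightarrow> nat.
                        (\<forall>i\<in>{1..e}. ks i \<le> n) \<and>
                        (\<forall>i. 1 \<le> i \<and> i < e \<longrightarrow> js (ks i) \<le> js (ks (Suc i)))}.
                      Ib b (\<Sum>i=1..e. js (ks i)) (\<Sum>i=1..e. ls (ks i)))))))"
  proof (intro impI allI)
    assume j0p: "0 < j0"
    fix l0 :: nat assume l0: "0 < l0 \<and> {j0..<j0 + l0} \<subseteq> J"
    have J1: "\<forall>j\<in>J. 1 \<le> j" using j0le j0p by force
    have GS: "G = cls b (SJ J)" using hull_SJ[OF hb hX(2) J J1] hG by simp
    define d where "d = nat \<lceil>real j0 / real l0\<rceil>"
    have q: "real j0 / real l0 \<le> of_int \<lceil>real j0 / real l0\<rceil>" by (rule le_of_int_ceiling)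
    have qp: "0 < real j0 / real l0" using j0p l0 by simp
    hence cp: "0 < \<lceil>real j0 / real l0\<rceil>" by simp
    hence rd: "real d = of_int \<lceil>real j0 / real l0\<rceil>" unfolding d_def by simp
    have "(1::int) \<le> \<lceil>real j0 / real l0\<rceil>" using cp by linarith
    from nat_mono[OF this] have d1: "1 \<le> d" unfolding d_def by simp
    have "real j0 / real l0 \<le> real d" using q rd by linarith
    hence "real j0 \<le> real d * real l0" using l0 by (simp add: divide_le_eq)
    hence dl: "j0 \<le> d * l0" by (metis of_nat_le_iff of_nat_mult)
    show "let d = nat \<lceil>real j0 / real l0\<rceil>; t = d * j0 in
          (d = 1 \<longrightarrow> G = Ib_inf b j0) \<and>
          (1 < d \<longrightarrow>
            (\<forall>(n::nat) (js::nat \<Rightarrow> nat) (ls::nat \<Rightarrow> nat).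
               (\<forall>k\<le>n. 0 < ls k) \<and> (\<forall>k<n. js (Suc k) > js k + ls k) \<and>
               J \<inter> {0..<t} = (\<Union>k\<le>n. {js k..<js k + ls k}) \<longrightarrow>
               G = Ib_inf b t \<union>
                   (\<Union>e\<in>{1..<d}. \<Union>ks\<in>{ks::nat \<Rightarrow> nat.
                        (\<forall>i\<in>{1..e}. ks i \<le> n) \<and>
                        (\<forall>i. 1 \<le> i \<and> i < e \<longrightarrow> js (ks i) \<le> js (ks (Suc i)))}.
                      Ib b (\<Sum>i=1..e. js (ks i)) (\<Sum>i=1..e. ls (ks i)))))"
      unfolding Let_def d_def[symmetric]
    proof (intro conjI impI allI)
      assume "d = 1"
      show "G = Ib_inf b j0"
      proof (rule set_eqI)
        fix x
        have "dg b x \<in> SJ J \<longleftrightarrow> j0 \<le> dg b x"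
          using SJ_ge[OF j0le] big[OF j0p _ _ _ dl d1, of J "dg b x"] l0 \<open>d = 1\<close> by auto
        thus "x \<in> G \<longleftrightarrow> x \<in> Ib_inf b j0" unfolding GS cls_def Ib_inf_iff[OF hb] by blast
      qed
    next
      fix n :: nat and js ls :: "nat \<Rightarrow> nat"
      assume H: "(\<forall>k\<le>n. 0 < ls k) \<and> (\<forall>k<n. js (Suc k) > js k + ls k) \<and>
               J \<inter> {0..<d * j0} = (\<Union>k\<le>n. {js k..<js k + ls k})"
      note ix = idx[OF j0p conjunct1[OF l0] conjunct2[OF l0] j0le dl d1 conjunct1[OF H] conjunct2[OF conjunct2[OF H]]]
      show "G = Ib_inf b (d * j0) \<union>
                   (\<Union>e\<in>{1..<d}. \<Union>ks\<in>{ks::nat \<Rightarrow> nat.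
                        (\<forall>i\<in>{1..e}. ks i \<le> n) \<and>
                        (\<forall>i. 1 \<le> i \<and> i < e \<longrightarrow> js (ks i) \<le> js (ks (Suc i)))}.
                      Ib b (\<Sum>i=1..e. js (ks i)) (\<Sum>i=1..e. ls (ks i)))"
      proof (rule set_eqI)
        fix x
        show "x \<in> G \<longleftrightarrow> x \<in> Ib_inf b (d * j0) \<union>
                   (\<Union>e\<in>{1..<d}. \<Union>ks\<in>{ks::nat \<Rightarrow> nat.
                        (\<forall>i\<in>{1..e}. ks i \<le> n) \<and>
                        (\<forall>i. 1 \<le> i \<and> i < e \<longrightarrow> js (ks i) \<le> js (ks (Suc i)))}.
                      Ib b (\<Sum>i=1..e. js (ks i)) (\<Sum>i=1..e. ls (ks i)))"
          unfolding GS cls_def Ib_inf_iff[OF hb] Ib_iff[OF hb] UN_iff Un_iff mem_Collect_eq ix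
          by blast
      qed
    qed
  qed
  have P2: "j0 = 0 \<and> b = 2 \<longrightarrow>
          (X = {1} \<longrightarrow> G = {1}) \<and>
          (X \<noteq> {1} \<longrightarrow> G = {1} \<union> dc_hull 2 (X - {1}))"
  proof (intro impI conjI)
    assume h: "j0 = 0 \<and> b = 2"
    obtain x0 where x0: "x0 \<in> X" "dg b x0 = 0" using j0J h J by auto
    have "0 < x0" using x0 hX(2) by (cases x0) auto
    hence "1 \<le> x0" "x0 < 2" using dg_bounds[OF hb \<open>0 < x0\<close>] x0 h by auto
    hence "x0 = 1" by simp
    hence oneX: "1 \<in> X" using x0 by simp
    have G2: "G = dc_hull 2 X" using hG h by simp
    have d1: "dc_semigroup 2 {1}" using dc_insert1[OF dc_empty] by simp
    { assume "X = {1}"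
      thus "G = {1}" unfolding G2 by (intro hull_eq[OF d1]) auto }
    { let ?H = "dc_hull 2 (X - {1})"
      have n0: "0 \<notin> X - {1}" using hX(2) by simp
      have hd: "dc_semigroup 2 ?H" "X - {1} \<subseteq> ?H" using hull_dc[OF _ n0] by auto
      show "G = {1} \<union> ?H" unfolding G2
      proof (rule hull_eq[OF dc_insert1[OF hd(1)]])
        show "X \<subseteq> {1} \<union> ?H" using hd(2) by blast
      next
        fix G' assume "dc_semigroup 2 G'" "X \<subseteq> G'"
        thus "{1} \<union> ?H \<subseteq> G'" using hull_least[of 2 G' "X - {1}"] oneX by blast
      qed }
  qed
  have P3: "j0 = 0 \<and> 2 < b \<longrightarrow> G = {0<..}"
  proof
    assume h: "j0 = 0 \<and> 2 < b"
    obtain x0 where x0: "x0 \<in> X" "dg b x0 = 0" using j0J h J by auto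
    show "G = {0<..}" unfolding hG
    proof (rule hull_eq[OF dc_pos[OF hb]])
      show "X \<subseteq> {0<..}"
      proof
        fix x assume "x \<in> X" thus "x \<in> {0<..}" using hX(2) by (cases x) auto
      qed
    next
      fix G' assume G': "dc_semigroup b G'" "X \<subseteq> G'"
      have p0: "b ^ 0 \<in> G'" using pow_in_G[OF hb G'(1)] x0 G'(2) by fastforce
      have pm: "b ^ m \<in> G'" for m
      proof (induction m)
        case 0 show ?case by (rule p0)
        case (Suc m)
        have "b ^ (0 + m + 1) \<in> G'" using pow_step1[OF hb G'(1) p0 Suc] h by simp
        thus ?case by simp
      qed
      show "{0<..} \<subseteq> G'"
      proof
        fix y :: nat assume "y \<in> {0<..}"
        thus "y \<in> G'" using in_G_of_pow[OF hb G'(1) pm] by simp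
      qed
    qed
  qed
  show ?thesis using P1 P2 P3 by blast
qed

end
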